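(* Let $Q=(q_n)_{n\ge1}$ be a basic sequence that is infinite in limit, and let $F$ be a $Q$-special sequence. Then $x_F$ is not simply $Q$-normal.
   Context: A basic sequence is a sequence $Q=(q_n)_{n\ge1}$ of integers with $q_n\ge 2$; it is infinite in limit if $q_n\to\infty$. $\mathbb{N}$ denotes the positive integers. For each positive integer $j$ let $\nu_j=\min\{N : q_m\ge 2j^2 \text{ for all } m\ge N\}$. Define $l_1=\max(\nu_2-1,1)$ and, recursively for $i\ge 2$, $l_i=\max\big(\min\{k\in\mathbb{N} : l_1+2l_2+\cdots+(i-1)l_{i-1}+ik\ge \nu_{i+1}-1\},1\big)$. Put $L_i=\sum_{j=1}^i jl_j$ (with $L_0=0$). Let $S_Q=\{(a,b,c)\in\mathbb{N}^3 : b\le l_a,\ c\le a\}$ and $\phi_Q(a,b,c)=L_{a-1}+(b-1)a+c$; $\phi_Q$ is a bijection $S_Q\to\mathbb{N}$. A $Q$-special sequence is a family of integers $F=(F_{(a,b,c)})_{(a,b,c)\in S_Q}$ with $F_{(a,b,1)}=0$ for all $(a,b,1)\in S_Q$ and $\frac{F_{(a,b,c)}}{q_{\phi_Q(a,b,c)}}\in\left[\frac{c-1}{a}-\frac{1}{2a^2},\frac{c-1}{a}+\frac{1}{2a^2}\right]$ for $(a,b,c)\in S_Q$ with $c>1$. For such $F$ put $E_{F,n}=F_{\phi_Q^{-1}(n)}$ and $x_F=\sum_{n=1}^\infty \frac{E_{F,n}}{q_1q_2\cdots q_n}$; this is the $Q$-Cantor series expansion of $x_F$, with digits $E_{F,n}$.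 For a real $x\in[0,1)$ with $Q$-Cantor series expansion $x=\sum_n \frac{E_n}{q_1\cdots q_n}$ ($E_n\in\{0,\dots,q_n-1\}$, $E_n\ne q_n-1$ infinitely often) and a nonnegative integer $d$, let $N_n^Q(d,x)=\#\{1\le j\le n : E_j=d\}$ and $Q_n^{(1)}=\sum_{j=1}^n\frac1{q_j}$. The number $x$ is simply $Q$-normal if $\lim_{n\to\infty} N_n^Q(d,x)/Q_n^{(1)}=1$ for every nonnegative integer $d$ (blocks of length $1$). *)

theory Defs
  imports Complex_Main
begin

text \<open>A basic sequence q is indexed from 1 (the value q 0 is irrelevant).\<close>

definition basic_seq :: "(nat \<Rightarrow> nat) \<Rightarrow> bool" where
  "basic_seq q \<longleftrightarrow> (\<forall>n\<ge>1. q n \<ge> 2)"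

definition infinite_in_limit :: "(nat \<Rightarrow> nat) \<Rightarrow> bool" where
  "infinite_in_limit q \<longleftrightarrow> filterlim q at_top sequentially"

definition nu :: "(nat \<Rightarrow> nat) \<Rightarrow> nat \<Rightarrow> nat" where
  "nu q j = (LEAST N. N \<ge> 1 \<and> (\<forall>m\<ge>N. q m \<ge> 2 * j^2))"

definition lstep :: "(nat \<Rightarrow> nat) \<Rightarrow> nat \<Rightarrow> nat \<Rightarrow> nat" where
  "lstep q i Lp = (if i = 1 then max (nu q 2 - 1) 1
     else max (LEAST k. k \<ge> 1 \<and> Lp + i * k \<ge> nu q (i + 1) - 1) 1)"

fun Lseq :: "(nat \<Rightarrow> nat) \<Rightarrow> nat \<Rightarrow> nat" where
  "Lseq q 0 = 0"
| "Lseq q (Suc i) = Lseq q i + Suc i * lstep q (Suc i) (Lseq q i)"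

definition lseq :: "(nat \<Rightarrow> nat) \<Rightarrow> nat \<Rightarrow> nat" where
  "lseq q i = lstep q i (Lseq q (i - 1))"

definition S_Q :: "(nat \<Rightarrow> nat) \<Rightarrow> (nat \<times> nat \<times> nat) set" where
  "S_Q q = {(a, b, c). 1 \<le> a \<and> 1 \<le> b \<and> 1 \<le> c \<and> b \<le> lseq q a \<and> c \<le> a}"

definition phi_Q :: "(nat \<Rightarrow> nat) \<Rightarrow> nat \<times> nat \<times> nat \<Rightarrow> nat" where
  "phi_Q q = (\<lambda>(a, b, c). Lseq q (a - 1) + (b - 1) * a + c)"

definition Q_special :: "(nat \<Rightarrow> nat) \<Rightarrow> (nat \<times> nat \<times> nat \<Rightarrow> int) \<Rightarrow> bool" where
  "Q_special q F \<longleftrightarrow>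
     (\<forall>a b. (a, b, 1) \<in> S_Q q \<longrightarrow> F (a, b, 1) = 0) \<and>
     (\<forall>a b c. (a, b, c) \<in> S_Q q \<longrightarrow> c > 1 \<longrightarrow>
        of_int (F (a, b, c)) / real (q (phi_Q q (a, b, c)))
          \<in> {(real c - 1) / real a - 1 / (2 * real a ^ 2) ..
             (real c - 1) / real a + 1 / (2 * real a ^ 2)})"

definition E_F :: "(nat \<Rightarrow> nat) \<Rightarrow> (nat \<times> nat \<times> nat \<Rightarrow> int) \<Rightarrow> nat \<Rightarrow> int" where
  "E_F q F n = F (THE s. s \<in> S_Q q \<and> phi_Q q s = n)"

definition x_F :: "(nat \<Rightarrow> nat) \<Rightarrow> (nat \<times> nat \<times> nat \<Rightarrow> int) \<Rightarrow> real" where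
  "x_F q F = (\<Sum>n. of_int (E_F q F (Suc n)) / (\<Prod>k\<in>{1..Suc n}. real (q k)))"

text \<open>E is the Q-Cantor series expansion of x (digits indexed from 1).\<close>
definition cantor_expansion :: "(nat \<Rightarrow> nat) \<Rightarrow> real \<Rightarrow> (nat \<Rightarrow> nat) \<Rightarrow> bool" where
  "cantor_expansion q x E \<longleftrightarrow>
     (\<forall>n\<ge>1. E n \<le> q n - 1) \<and>
     (\<forall>N. \<exists>n\<ge>N. n \<ge> 1 \<and> E n \<noteq> q n - 1) \<and>
     (\<lambda>n. real (E (Suc n)) / (\<Prod>k\<in>{1..Suc n}. real (q k))) sums x"

definition N_count :: "(nat \<Rightarrow> nat) \<Rightarrow> nat \<Rightarrow> nat \<Rightarrow> nat" where
  "N_count E d n = card {j \<in> {1..n}. E j = d}"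

definition Q1 :: "(nat \<Rightarrow> nat) \<Rightarrow> nat \<Rightarrow> real" where
  "Q1 q n = (\<Sum>j=1..n. 1 / real (q j))"

definition simply_Q_normal :: "(nat \<Rightarrow> nat) \<Rightarrow> real \<Rightarrow> bool" where
  "simply_Q_normal q x \<longleftrightarrow> 0 \<le> x \<and> x < 1 \<and>
     (\<exists>E. cantor_expansion q x E \<and>
        (\<forall>d::nat. (\<lambda>n. real (N_count E d n) / Q1 q n) \<longlonglongrightarrow> 1))"

end

theory Submission imports Defs begin
definition PP :: "(nat \<Rightarrow> nat) \<Rightarrow> nat \<Rightarrow> real" where
  "PP q N = (\<Prod>k\<in>{1..N}. real (q k))"

lemma q_Suc: assumes "\<forall>n\<ge>1. q n \<ge> 2" shows "q (Suc m) \<ge> 2" "real (q (Suc m)) \<ge> 2" "real (q (Suc m)) > 0"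
  "real (q (Suc m) - 1) = real (q (Suc m)) - 1"
proof -
  show a: "q (Suc m) \<ge> 2" using assms by auto
  then show "real (q (Suc m)) \<ge> 2" "real (q (Suc m)) > 0" by auto
  show "real (q (Suc m) - 1) = real (q (Suc m)) - 1" using a by (simp add: of_nat_diff)
qed

lemma PP_0[simp]: "PP q 0 = 1" by (simp add: PP_def)
lemma PP_Suc: "PP q (Suc N) = PP q N * real (q (Suc N))"
  by (simp add: PP_def prod.nat_ivl_Suc' mult.commute)

lemma PP_ge:
  assumes "\<forall>n\<ge>1. q n \<ge> 2" shows "PP q N \<ge> 2 ^ N"
proof (induction N)
  case (Suc N)
  have "real (q (Suc N)) \<ge> 2" using q_Suc[OF assms] by auto
  moreover have "0 \<le> PP q N" using Suc by (smt (verit) zero_le_power)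
  ultimately have "PP q N * real (q (Suc N)) \<ge> 2^N * 2"
    using Suc by (intro mult_mono) auto
  then show ?case by (simp add: PP_Suc mult.commute)
qed simp

lemma PP_pos: assumes "\<forall>n\<ge>1. q n \<ge> 2" shows "PP q N > 0"
  using PP_ge[OF assms, of N] by (smt (verit) zero_less_power)

lemma inv_PP_lim:
  assumes "\<forall>n\<ge>1. q n \<ge> 2" shows "(\<lambda>n. 1 / PP q (n + N)) \<longlonglongrightarrow> 0"
proof -
  have "(\<lambda>n. 1 / PP q n) \<longlonglongrightarrow> 0"
  proof (rule tendsto_sandwich[of "\<lambda>_. 0" _ _ "\<lambda>n. (1/2)^n"])
    show "\<forall>\<^sub>F n in sequentially. 0 \<le> 1 / PP q n" using PP_pos[OF assms] by (simp add: less_imp_le)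
    show "\<forall>\<^sub>F n in sequentially. 1 / PP q n \<le> (1/2)^n"
    proof (intro always_eventually allI)
      fix n
      have "1 / PP q n \<le> 1 / 2^n"
        using PP_ge[OF assms, of n] PP_pos[OF assms, of n] by (intro divide_left_mono) auto
      then show "1 / PP q n \<le> (1/2)^n" by (simp add: power_divide)
    qed
  qed (auto intro: LIMSEQ_realpow_zero)
  then show ?thesis by (rule LIMSEQ_ignore_initial_segment)
qed

lemma tel:
  assumes "\<forall>n\<ge>1. q n \<ge> 2"
  shows "(\<lambda>n. (real (q (Suc (n+N))) - 1) / PP q (Suc (n+N))) sums (1 / PP q N)"
proof -
  have "(\<lambda>n. 1 / PP q (n + N) - 1 / PP q (Suc n + N)) sums (1 / PP q (0 + N) - 0)"
    using telescope_sums'[OF inv_PP_lim[OF assms, of N]] .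
  moreover have "1 / PP q (n + N) - 1 / PP q (Suc n + N) = (real (q (Suc (n+N))) - 1) / PP q (Suc (n+N))" for n
  proof -
    have p: "PP q (n+N) > 0" "real (q (Suc (n+N))) > 0" using PP_pos[OF assms] q_Suc[OF assms] by auto
    show ?thesis using p by (simp add: PP_Suc field_simps)
  qed
  ultimately show ?thesis by simp
qed

fun II :: "(nat \<Rightarrow> nat) \<Rightarrow> (nat \<Rightarrow> nat) \<Rightarrow> nat \<Rightarrow> nat" where
  "II q E 0 = 0"
| "II q E (Suc N) = II q E N * q (Suc N) + E (Suc N)"

lemma II_eq:
  assumes "\<forall>n\<ge>1. q n \<ge> 2"
  shows "PP q N * (\<Sum>n<N. real (E (Suc n)) / PP q (Suc n)) = real (II q E N)"
proof (induction N)
  case (Suc N)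
  have p: "PP q N > 0" "real (q (Suc N)) > 0" using PP_pos[OF assms] q_Suc[OF assms] by auto
  have "PP q (Suc N) * (\<Sum>n<Suc N. real (E (Suc n)) / PP q (Suc n))
     = real (q (Suc N)) * (PP q N * (\<Sum>n<N. real (E (Suc n)) / PP q (Suc n))) + real (E (Suc N))"
    using p by (simp add: PP_Suc field_simps)
  then show ?case using Suc by simp
qed simp

lemma summable_digits:
  assumes "\<forall>n\<ge>1. q n \<ge> 2" "\<forall>n\<ge>1. E n \<le> q n - 1"
  shows "summable (\<lambda>n. real (E (Suc n)) / PP q (Suc n))"
proof (rule summable_comparison_test[OF _ sums_summable[OF tel[OF assms(1), of 0]]])
  show "\<exists>N. \<forall>n\<ge>N. norm (real (E (Suc n)) / PP q (Suc n)) \<le> (real (q (Suc (n+0))) - 1) / PP q (Suc (n+0))"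
  proof (intro exI allI impI)
    fix n
    have "E (Suc n) \<le> q (Suc n) - 1" using assms by auto
    then have "real (E (Suc n)) \<le> real (q (Suc n) - 1)" by (simp only: of_nat_le_iff)
    then have "real (E (Suc n)) \<le> real (q (Suc n)) - 1" by (simp only: q_Suc(4)[OF assms(1)])
    then show "norm (real (E (Suc n)) / PP q (Suc n)) \<le> (real (q (Suc (n+0))) - 1) / PP q (Suc (n+0))"
      using PP_pos[OF assms(1), of "Suc n"] by (simp add: divide_right_mono)
  qed
qed

lemma tail_bound:
  assumes q2: "\<forall>n\<ge>1. q n \<ge> 2" and E1: "\<forall>n\<ge>1. E n \<le> q n - 1"
    and E2: "\<forall>N. \<exists>n\<ge>N. n \<ge> 1 \<and> E n \<noteq> q n - 1"
    and xs: "(\<lambda>n. real (E (Suc n)) / PP q (Suc n)) sums x"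
  shows "0 \<le> PP q N * (x - (\<Sum>n<N. real (E (Suc n)) / PP q (Suc n)))
       \<and> PP q N * (x - (\<Sum>n<N. real (E (Suc n)) / PP q (Suc n))) < 1"
proof -
  define t where "t n = real (E (Suc n)) / PP q (Suc n)" for n
  define g where "g n = (real (q (Suc (n+N))) - 1) / PP q (Suc (n+N))" for n
  have sm: "summable t" unfolding t_def using summable_digits[OF q2 E1] .
  have x: "x = suminf t" using xs sums_unique unfolding t_def by auto
  have d: "x - (\<Sum>n<N. t n) = (\<Sum>n. t (n + N))"
    using suminf_split_initial_segment[OF sm, of N] x by simp
  have smN: "summable (\<lambda>n. t (n + N))" using sm by (simp add: summable_iff_shift)
  have gs: "g sums (1 / PP q N)" unfolding g_def using tel[OF q2] .
  have tn: "0 \<le> t n" for n unfolding t_def using PP_pos[OF q2] by (auto intro: divide_nonneg_pos)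
  have le: "t (n + N) \<le> g n" for n
  proof -
    have "E (Suc (n+N)) \<le> q (Suc (n+N)) - 1" using E1 by auto
    then have "real (E (Suc (n+N))) \<le> real (q (Suc (n+N)) - 1)" by (simp only: of_nat_le_iff)
    then have "real (E (Suc (n+N))) \<le> real (q (Suc (n+N))) - 1" by (simp only: q_Suc(4)[OF q2])
    then show ?thesis unfolding t_def g_def
      using PP_pos[OF q2, of "Suc (n+N)"] by (simp add: divide_right_mono)
  qed
  obtain m where m: "m \<ge> Suc N" "E m \<noteq> q m - 1" using E2 by auto
  define i where "i = m - Suc N"
  have mi: "m = Suc (i + N)" using m unfolding i_def by simp
  have lt: "t (i + N) < g i"
  proof -
    have "E (Suc (i+N)) \<le> q (Suc (i+N)) - 1" using E1 by auto
    then have "E (Suc (i+N)) < q (Suc (i+N)) - 1" using m mi by auto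
    then have "real (E (Suc (i+N))) < real (q (Suc (i+N)) - 1)" by (simp only: of_nat_less_iff)
    then have "real (E (Suc (i+N))) < real (q (Suc (i+N))) - 1" by (simp only: q_Suc(4)[OF q2])
    then show ?thesis unfolding t_def g_def
      using PP_pos[OF q2, of "Suc (i+N)"] by (simp add: divide_strict_right_mono)
  qed
  have "0 < suminf (\<lambda>n. g n - t (n + N))"
  proof -
    have "summable (\<lambda>n. g n - t (n + N))" using sums_summable[OF gs] smN by (rule summable_diff)
    then show ?thesis using suminf_pos_iff[of "\<lambda>n. g n - t (n + N)"] le lt by auto
  qed
  then have "(\<Sum>n. t (n + N)) < 1 / PP q N"
    using suminf_diff[OF sums_summable[OF gs] smN] sums_unique[OF gs] by simp
  then have "PP q N * (\<Sum>n. t (n + N)) < 1" using PP_pos[OF q2, of N]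
    by (simp add: field_simps)
  moreover have "0 \<le> (\<Sum>n. t (n + N))" using suminf_nonneg[OF smN] tn by auto
  ultimately show ?thesis using d PP_pos[OF q2, of N] unfolding t_def by simp
qed

lemma floor_II:
  assumes q2: "\<forall>n\<ge>1. q n \<ge> 2" and E1: "\<forall>n\<ge>1. E n \<le> q n - 1"
    and E2: "\<forall>N. \<exists>n\<ge>N. n \<ge> 1 \<and> E n \<noteq> q n - 1"
    and xs: "(\<lambda>n. real (E (Suc n)) / PP q (Suc n)) sums x"
  shows "\<lfloor>PP q N * x\<rfloor> = int (II q E N)"
proof -
  have "PP q N * x = real (II q E N) + PP q N * (x - (\<Sum>n<N. real (E (Suc n)) / PP q (Suc n)))"
    using II_eq[OF q2, of N E] by (simp add: algebra_simps)
  then show ?thesis using tail_bound[OF assms, of N] by (intro floor_unique) auto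
qed

lemma expansion_unique:
  assumes q2: "\<forall>n\<ge>1. q n \<ge> 2"
    and E1: "\<forall>n\<ge>1. E n \<le> q n - 1" and E2: "\<forall>N. \<exists>n\<ge>N. n \<ge> 1 \<and> E n \<noteq> q n - 1"
    and xs: "(\<lambda>n. real (E (Suc n)) / PP q (Suc n)) sums x"
    and E1': "\<forall>n\<ge>1. E' n \<le> q n - 1" and E2': "\<forall>N. \<exists>n\<ge>N. n \<ge> 1 \<and> E' n \<noteq> q n - 1"
    and xs': "(\<lambda>n. real (E' (Suc n)) / PP q (Suc n)) sums x"
  shows "E (Suc n) = E' (Suc n)"
proof -
  have "II q E N = II q E' N" for N
    using floor_II[OF q2 E1 E2 xs, of N] floor_II[OF q2 E1' E2' xs', of N] by simp
  from this[of "Suc n"] this[of n] show ?thesis by simp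
qed

lemma lstep_ge1: "lstep q i Lp \<ge> 1" unfolding lstep_def by auto
lemma lseq_ge1: "lseq q i \<ge> 1" unfolding lseq_def by (rule lstep_ge1)
lemma Lseq_Suc': "Lseq q (Suc i) = Lseq q i + Suc i * lseq q (Suc i)" by (simp add: lseq_def)
declare Lseq.simps(2)[simp del]

lemma Lseq_less: "Lseq q i < Lseq q (Suc i)"
  using lseq_ge1[of q "Suc i"] by (simp add: Lseq_Suc')

lemma Lseq_sm: "strict_mono (Lseq q)"
  using Lseq_less by (simp add: strict_mono_Suc_iff)

lemma Lseq_ge: "Lseq q i \<ge> i"
  by (induction i) (use Lseq_less in \<open>auto simp: Suc_le_eq intro: le_less_trans\<close>)

lemma Lseq_a: "a \<ge> 1 \<Longrightarrow> Lseq q a = Lseq q (a-1) + a * lseq q a"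
  by (cases a) (auto simp: Lseq_Suc')

lemma nu_prop:
  assumes "infinite_in_limit q" "m \<ge> nu q j" shows "2 * j^2 \<le> q m"
proof -
  have "\<forall>\<^sub>F m in sequentially. 2 * j^2 \<le> q m"
    using assms(1) unfolding infinite_in_limit_def filterlim_at_top by auto
  then obtain N where N: "\<forall>m\<ge>N. 2 * j^2 \<le> q m" by (auto simp: eventually_sequentially)
  have "\<exists>N. N \<ge> 1 \<and> (\<forall>m\<ge>N. q m \<ge> 2 * j^2)"
    by (rule exI[of _ "max N 1"]) (use N in auto)
  from LeastI_ex[OF this] have "\<forall>m\<ge>nu q j. q m \<ge> 2 * j^2" unfolding nu_def by blast
  then show ?thesis using assms(2) by auto
qed

lemma Lseq_nu: "i \<ge> 1 \<Longrightarrow> nu q (i+1) \<le> Lseq q i + 1"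
proof (cases i)
  case (Suc j)
  show ?thesis
  proof (cases "j = 0")
    case True
    then show ?thesis using Suc by (simp add: lstep_def numeral_2_eq_2 Lseq.simps)
  next
    case False
    define P where "P k = (k \<ge> 1 \<and> Lseq q j + Suc j * k \<ge> nu q (Suc j + 1) - 1)" for k
    have "P (max 1 (nu q (Suc j + 1)))" unfolding P_def
      by (auto simp: max_def)
    then have L: "P (LEAST k. P k)" by (rule LeastI)
    have ls: "lstep q (Suc j) (Lseq q j) = max (LEAST k. P k) 1"
      using False unfolding lstep_def P_def by (simp add: numeral_2_eq_2)
    have "Lseq q j + Suc j * (LEAST k. P k) \<le> Lseq q j + Suc j * max (LEAST k. P k) 1"
      by (intro add_left_mono mult_le_mono2) simp
    then have "nu q (Suc j + 1) - 1 \<le> Lseq q (Suc j)" using L ls unfolding P_def by (simp add: Lseq.simps)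
    then show ?thesis using Suc by arith
  qed
qed simp

lemma phi_block:
  assumes "(a,b,c) \<in> S_Q q"
  shows "Lseq q (a-1) < phi_Q q (a,b,c) \<and> phi_Q q (a,b,c) \<le> Lseq q a"
proof -
  from assms have h: "1 \<le> a" "1 \<le> b" "1 \<le> c" "b \<le> lseq q a" "c \<le> a" by (auto simp: S_Q_def)
  have m1: "(b-1)*a \<le> (lseq q a - 1) * a" using h by (intro mult_le_mono1) auto
  have m2: "(lseq q a - 1) * a + a = a * lseq q a" using lseq_ge1[of q a]
    by (cases "lseq q a") auto
  have p: "phi_Q q (a,b,c) = Lseq q (a-1) + (b-1)*a + c" by (simp add: phi_Q_def)
  show ?thesis unfolding p using h m1 m2 Lseq_a[of a q] by linarith
qed

lemma block_unique:
  assumes "a \<ge> 1" "a' \<ge> 1" "Lseq q (a-1) < n" "n \<le> Lseq q a" "Lseq q (a'-1) < n" "n \<le> Lseq q a'"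
  shows "a = a'"
proof (rule ccontr)
  assume "a \<noteq> a'"
  then consider "a < a'" | "a' < a" by linarith
  then show False
  proof cases
    case 1
    then have "Lseq q a \<le> Lseq q (a'-1)" using strict_mono_less_eq[OF Lseq_sm] by auto
    then show False using assms by linarith
  next
    case 2
    then have "Lseq q a' \<le> Lseq q (a-1)" using strict_mono_less_eq[OF Lseq_sm] by auto
    then show False using assms by linarith
  qed
qed

lemma divmod_aux: "(c::nat) < a \<Longrightarrow> (x*a + c) div a = x \<and> (x*a + c) mod a = c"
  by auto

lemma phi_inj:
  assumes "s \<in> S_Q q" "s' \<in> S_Q q" "phi_Q q s = phi_Q q s'" shows "s = s'"
proof -
  obtain a b c where s: "s = (a,b,c)" by (cases s) auto
  obtain a' b' c' where s': "s' = (a',b',c')" by (cases s') auto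
  have h: "1 \<le> a" "1 \<le> b" "1 \<le> c" "c \<le> a" "1 \<le> a'" "1 \<le> b'" "1 \<le> c'" "c' \<le> a'"
    using assms s s' by (auto simp: S_Q_def)
  have "a = a'" using phi_block[of a b c q] phi_block[of a' b' c' q] assms s s' h
    by (intro block_unique[of a a' q "phi_Q q s"]) auto
  then have e: "(b-1)*a + (c-1) = (b'-1)*a + (c'-1)" using assms(3) s s' h by (simp add: phi_Q_def)
  have "c - 1 < a" "c' - 1 < a" using h \<open>a = a'\<close> by auto
  then have "b - 1 = b' - 1 \<and> c - 1 = c' - 1" using divmod_aux[of "c-1" a "b-1"] divmod_aux[of "c'-1" a "b'-1"] e
    by metis
  then show ?thesis using s s' h \<open>a = a'\<close> by auto
qed

lemma phi_surj:
  assumes "n \<ge> 1" shows "\<exists>s\<in>S_Q q. phi_Q q s = n"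
proof -
  define a where "a = (LEAST a. n \<le> Lseq q a)"
  have ex: "n \<le> Lseq q n" using Lseq_ge .
  have a1: "n \<le> Lseq q a" unfolding a_def by (rule LeastI[of "\<lambda>a. n \<le> Lseq q a" n, OF ex])
  have a0: "a \<ge> 1" using a1 assms by (cases a) auto
  have a2: "Lseq q (a-1) < n"
  proof -
    have "\<not> n \<le> Lseq q (a-1)" unfolding a_def by (rule not_less_Least) (use a0 a_def in auto)
    then show ?thesis by simp
  qed
  define m where "m = n - Lseq q (a-1) - 1"
  have "m < a * lseq q a" using a1 a2 Lseq_a[OF a0, of q] unfolding m_def by linarith
  then have md: "m div a < lseq q a" by (metis less_mult_imp_div_less mult.commute)
  have mm: "m mod a < a" using a0 by simp
  let ?s = "(a, m div a + 1, m mod a + 1)"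
  have "?s \<in> S_Q q" using md mm a0 by (auto simp: S_Q_def Suc_le_eq)
  moreover have "phi_Q q ?s = n"
    using a2 unfolding phi_Q_def m_def by (simp add: div_mult_mod_eq)
  ultimately show ?thesis by blast
qed

lemma E_F_phi: "s \<in> S_Q q \<Longrightarrow> E_F q F (phi_Q q s) = F s"
  unfolding E_F_def by (rule arg_cong[of _ _ F], rule the_equality) (auto intro: phi_inj)

lemma real_bounds:
  fixes f Q A C :: real
  assumes "A \<ge> 2" "2 \<le> C" "C \<le> A" "Q \<ge> 2*A^2"
    "f/Q \<ge> (C-1)/A - 1/(2*A^2)" "f/Q \<le> (C-1)/A + 1/(2*A^2)"
  shows "f \<ge> 3 \<and> f < Q"
proof -
  have Q0: "Q > 0" using assms(1,4) by (smt (verit) zero_less_power)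
  have A0: "A > 0" using assms by simp
  have "(C-1)/A - 1/(2*A^2) \<ge> 1/A - 1/(2*A^2)" using assms A0 by (simp add: divide_right_mono)
  also have "1/A - 1/(2*A^2) = (2*A-1)/(2*A^2)" using A0 by (simp add: field_simps power2_eq_square)
  finally have "f/Q \<ge> (2*A-1)/(2*A^2)" using assms by linarith
  then have "f \<ge> Q * ((2*A-1)/(2*A^2))" using Q0 by (simp add: field_simps)
  moreover have "Q * ((2*A-1)/(2*A^2)) \<ge> (2*A^2) * ((2*A-1)/(2*A^2))"
    using assms A0 by (intro mult_right_mono) auto
  moreover have "(2*A^2) * ((2*A-1)/(2*A^2)) = 2*A-1" using A0 by simp
  ultimately have f3: "f \<ge> 3" using assms by linarith
  have "(C-1)/A + 1/(2*A^2) \<le> (A-1)/A + 1/(2*A^2)" using assms A0 by (simp add: divide_right_mono)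
  also have "(A-1)/A + 1/(2*A^2) < 1"
  proof -
    have "1/(2*A^2) < 1/A" using A0 assms(1) by (simp add: field_simps power2_eq_square)
    moreover have "(A-1)/A = 1 - 1/A" using A0 by (simp add: field_simps)
    ultimately show ?thesis by linarith
  qed
  finally have "f/Q < 1" using assms by linarith
  then have "f < Q" using Q0 by (simp add: field_simps)
  with f3 show ?thesis by simp
qed

lemma digit:
  assumes "basic_seq q" "infinite_in_limit q" "Q_special q F" "n \<ge> 1"
  shows "E_F q F n = 0 \<or> (3 \<le> E_F q F n \<and> E_F q F n < int (q n))"
proof -
  obtain s where s: "s \<in> S_Q q" "phi_Q q s = n" using phi_surj[OF assms(4)] by blast
  obtain a b c where abc: "s = (a,b,c)" by (cases s) auto
  have E: "E_F q F n = F (a,b,c)" using E_F_phi[OF s(1)] s abc by simp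
  have h: "1 \<le> a" "1 \<le> b" "1 \<le> c" "c \<le> a" using s abc by (auto simp: S_Q_def)
  show ?thesis
  proof (cases "c = 1")
    case True
    then show ?thesis using assms(3) s abc E unfolding Q_special_def by auto
  next
    case False
    then have c2: "c \<ge> 2" "a \<ge> 2" using h by auto
    have "nu q a \<le> Lseq q (a-1) + 1" using Lseq_nu[of "a-1" q] c2 by simp
    moreover have "Lseq q (a-1) < n" using phi_block[of a b c q] s abc by simp
    ultimately have "2 * a^2 \<le> q n" using nu_prop[OF assms(2)] by simp
    then have Qb: "real (q n) \<ge> 2 * (real a)^2" by (metis of_nat_le_iff of_nat_mult of_nat_numeral of_nat_power)
    have iv: "of_int (F (a, b, c)) / real (q n)
          \<in> {(real c - 1) / real a - 1 / (2 * real a ^ 2) .. (real c - 1) / real a + 1 / (2 * real a ^ 2)}"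
    proof -
      have c1: "1 < c" using c2 by simp
      have pn: "phi_Q q (a,b,c) = n" using s abc by simp
      have "of_int (F (a, b, c)) / real (q (phi_Q q (a,b,c)))
          \<in> {(real c - 1) / real a - 1 / (2 * real a ^ 2) .. (real c - 1) / real a + 1 / (2 * real a ^ 2)}"
        using assms(3) s(1) abc c1 unfolding Q_special_def by blast
      then show ?thesis unfolding pn .
    qed
    have "real_of_int (F (a,b,c)) \<ge> 3 \<and> real_of_int (F (a,b,c)) < real (q n)"
      using c2 h Qb iv by (intro real_bounds[of "real a" "real c"]) auto
    then have "3 \<le> F (a,b,c) \<and> F (a,b,c) < int (q n)" by linarith
    then show ?thesis using E by simp
  qed
qed

theorem mainTheorem2:
  fixes q :: "nat \<Rightarrow> nat" and F :: "nat \<times> nat \<times> nat \<Rightarrow> int"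
  assumes "basic_seq q" and "infinite_in_limit q" and "Q_special q F"
  shows "\<not> simply_Q_normal q (x_F q F)"
proof
  assume N: "simply_Q_normal q (x_F q F)"
  have q2: "\<forall>n\<ge>1. q n \<ge> 2" using assms(1) unfolding basic_seq_def by simp
  define E0 where "E0 n = nat (E_F q F n)" for n
  have dg: "n \<ge> 1 \<Longrightarrow> E_F q F n = 0 \<or> (3 \<le> E_F q F n \<and> E_F q F n < int (q n))" for n
    using digit[OF assms] by blast
  have E01: "\<forall>n\<ge>1. E0 n \<le> q n - 1"
  proof (intro allI impI)
    fix n :: nat assume "n \<ge> 1"
    then show "E0 n \<le> q n - 1" using dg[of n] q2 unfolding E0_def by auto
  qed
  have E0ne1: "n \<ge> 1 \<Longrightarrow> E0 n \<noteq> 1" for n using dg[of n] unfolding E0_def by auto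
  have E0r: "n \<ge> 1 \<Longrightarrow> real (E0 n) = of_int (E_F q F n)" for n
    using dg[of n] unfolding E0_def by auto
  have E02: "\<forall>N. \<exists>n\<ge>N. n \<ge> 1 \<and> E0 n \<noteq> q n - 1"
  proof
    fix N
    let ?s = "(Suc N, 1, 1) :: nat \<times> nat \<times> nat"
    have sS: "?s \<in> S_Q q" using lseq_ge1[of q "Suc N"] by (auto simp: S_Q_def)
    have p: "phi_Q q ?s = Lseq q N + 1" by (simp add: phi_Q_def)
    have "E_F q F (Lseq q N + 1) = 0"
      using E_F_phi[OF sS, of F] p assms(3) sS unfolding Q_special_def by auto
    moreover have "q (Lseq q N + 1) \<ge> 2" using q2 by simp
    ultimately have "E0 (Lseq q N + 1) \<noteq> q (Lseq q N + 1) - 1" unfolding E0_def by simp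
    moreover have "Lseq q N + 1 \<ge> N" using Lseq_ge[of N q] by simp
    ultimately show "\<exists>n\<ge>N. n \<ge> 1 \<and> E0 n \<noteq> q n - 1" by (intro exI[of _ "Lseq q N + 1"]) auto
  qed
  have xs0: "(\<lambda>n. real (E0 (Suc n)) / PP q (Suc n)) sums x_F q F"
  proof -
    have sm: "summable (\<lambda>n. real (E0 (Suc n)) / PP q (Suc n))" by (rule summable_digits[OF q2 E01])
    have "x_F q F = (\<Sum>n. real (E0 (Suc n)) / PP q (Suc n))"
      unfolding x_F_def PP_def using E0r by simp
    then show ?thesis using sm summable_sums by simp
  qed
  from N obtain E where ce: "cantor_expansion q (x_F q F) E"
    and lim: "\<forall>d::nat. (\<lambda>n. real (N_count E d n) / Q1 q n) \<longlonglongrightarrow> 1"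
    unfolding simply_Q_normal_def by blast
  have E1: "\<forall>n\<ge>1. E n \<le> q n - 1" and E2: "\<forall>N. \<exists>n\<ge>N. n \<ge> 1 \<and> E n \<noteq> q n - 1"
    and xs: "(\<lambda>n. real (E (Suc n)) / PP q (Suc n)) sums x_F q F"
    using ce unfolding cantor_expansion_def PP_def by auto
  have eq: "E (Suc n) = E0 (Suc n)" for n
    by (rule expansion_unique[OF q2 E1 E2 xs E01 E02 xs0])
  have "E j \<noteq> 1" if j1: "j \<ge> 1" for j
  proof -
    obtain k where "j = Suc k" using j1 by (cases j) auto
    then show ?thesis using eq[of k] E0ne1[of j] j1 by simp
  qed
  then have "N_count E 1 n = 0" for n unfolding N_count_def by auto
  then have "(\<lambda>n. real (N_count E 1 n) / Q1 q n) = (\<lambda>n. 0)" by simp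
  then have "(\<lambda>n. 0::real) \<longlonglongrightarrow> 1" using lim by metis
  then show False using LIMSEQ_unique[OF tendsto_const] by fastforce
qed

end
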